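(* Consider the downlink RIS-aided multi-cell network described in the context, and let $L = \frac{T}{M_\text{B}M_\text{R}M_\text{U}+M_\text{B}M_\text{U}}$. Its area spectrum efficiency as a function of the unit training overhead $\beta\in[0,L)$ has the form $$\mathcal{A}(\beta) = K' \,\frac{T-\beta(M_\text{B}M_\text{R}M_\text{U}+M_\text{B}M_\text{U})}{T}\, p_{\text{E}_\text{B}}(\sigma_\text{B},\theta_\text{B})\, p_{\text{E}_\text{U}}(\sigma_\text{U},\theta_\text{U}),$$ with $K'>0$ independent of $\beta$. Then the optimal unit training overhead $\beta^*_\mathcal{A}\in(0,L)$ maximizing $\mathcal{A}$ satisfies $$\frac{\text{SNR}}{\sqrt{\pi}\, f(\beta^*_\mathcal{A})}\left(L-\beta^*_\mathcal{A}\right)\left(\frac{a e^{-a^2 f^2(\beta^*_\mathcal{A})}}{\operatorname{erf}(a f(\beta^*_\mathcal{A}))}+\frac{b e^{-b^2 f^2(\beta^*_\mathcal{A})}}{\operatorname{erf}(b f(\beta^*_\mathcal{A}))}-\frac{c e^{-c^2 f^2(\beta^*_\mathcal{A})}}{\operatorname{erf}(c f(\beta^*_\mathcal{A}))}-\frac{d e^{-d^2 f^2(\beta^*_\mathcal{A})}}{\operatorname{erf}(d f(\beta^*_\mathcal{A}))}\right)=1,$$ where $f(\beta)=\sqrt{1+\beta\,\text{SNR}}$, $a=\frac{\theta_\text{B}}{2\pi\sqrt{2k_\text{B}}}$, $b=\frac{\theta_\text{U}}{2\pi\sqrt{2k_\text{U}}}$, $c=\frac{1}{\sqrt{2k_\text{B}}}$,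 $d=\frac{1}{\sqrt{2k_\text{U}}}$.
   Context: Base stations (BSs) and user equipments (UEs) carry uniform linear arrays with $M_\text{B}\ge1$ and $M_\text{U}\ge1$ antennas; each reconfigurable intelligent surface (RIS) has $M_\text{R}$ reflecting elements. Beamwidths are $\theta_j=4/M_j$ (radians), $j\in\{\text{B},\text{U}\}$. A frame of length $T$ is split into a channel estimation phase of length $T_\text{E}=\beta(M_\text{B}M_\text{R}M_\text{U}+M_\text{B}M_\text{U})$ and a data phase of length $T_\text{D}=T-T_\text{E}$, where $\beta$ is the unit training overhead (training symbols per path). With average channel signal-to-noise ratio $\text{SNR}>0$, the estimation error variance is $\sigma_\text{E}^2=\frac{1}{1+\beta\,\text{SNR}}$, and the beam alignment error of end $j$ is a zero-mean Gaussian truncated to $[-\pi,\pi]$ with variance parameter $\sigma_j^2=k_j\pi^2\sigma_\text{E}^2$, $k_j\in(0,1]$. The alignment probability is $p_{\text{E}_j}(\sigma_j,\theta_j)=\operatorname{erf}\!\left(\frac{\theta_j}{2\sqrt{2\sigma_j^2}}\right)\Big/\operatorname{erf}\!\left(\frac{\pi}{\sqrt{2\sigma_j^2}}\right)$. The area spectrum efficiency is $\mathcal{A}=\frac{T_\text{D}}{T}\lambda_\text{B}\,\mathbb{E}[\log_2(1+\text{SINR})\,\mathbb{I}\{\text{SINR}>\tau\}]$, with $\lambda_\text{B}$ the BS density and $\tau$ an SINR threshold; the serving link's beamforming gain equals $N_\text{B}N_\text{U}$ with probability $p_{\text{E}_\text{B}}p_{\text{E}_\text{U}}$ and $0$ otherwise,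 and all remaining factors (geometry, blockage, interference, noise) form the constant $K'>0$ independent of $\beta$. *)

theory Defs
  imports "HOL-Analysis.Analysis"
begin

definition erf :: "real \<Rightarrow> real" where
  "erf x = 2 / sqrt pi * (LBINT t=0..x. exp (- (t\<^sup>2)))"

definition beamwidth :: "nat \<Rightarrow> real" where
  "beamwidth M = 4 / real M"

definition sigmaE2 :: "real \<Rightarrow> real \<Rightarrow> real" where
  "sigmaE2 SNR \<beta> = 1 / (1 + \<beta> * SNR)"

definition sigma2 :: "real \<Rightarrow> real \<Rightarrow> real \<Rightarrow> real" where
  "sigma2 k SNR \<beta> = k * pi\<^sup>2 * sigmaE2 SNR \<beta>"

text \<open>Alignment probability p_E(sigma, theta), with s2 = sigma^2.\<close>
definition pE :: "real \<Rightarrow> real \<Rightarrow> real" where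
  "pE s2 \<theta> = erf (\<theta> / (2 * sqrt (2 * s2))) / erf (pi / sqrt (2 * s2))"

definition ASE :: "real \<Rightarrow> real \<Rightarrow> nat \<Rightarrow> nat \<Rightarrow> nat \<Rightarrow> real \<Rightarrow> real \<Rightarrow> real \<Rightarrow> real \<Rightarrow> real" where
  "ASE K' T MB MR MU SNR kB kU \<beta> =
     K' * (T - \<beta> * (real MB * real MR * real MU + real MB * real MU)) / T
       * pE (sigma2 kB SNR \<beta>) (beamwidth MB) * pE (sigma2 kU SNR \<beta>) (beamwidth MU)"

end

theory Submission imports Defs begin
lemma erf_alt: "erf x = 2 / sqrt pi * (LBINT t=ereal 0..ereal x. exp (- (t\<^sup>2)))"
  by (simp add: erf_def zero_ereal_def)
lemma erf_deriv: "(erf has_real_derivative (2 / sqrt pi * exp (- (x\<^sup>2)))) (at x)"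
proof -
  have "((\<lambda>u. LBINT t=ereal 0..ereal u. exp (- (t\<^sup>2))) has_vector_derivative exp (- (x\<^sup>2))) (at x within {-\<bar>x\<bar>-1..\<bar>x\<bar>+1})"
    by (rule interval_integral_FTC2) (auto intro!: continuous_intros)
  then have "((\<lambda>u. LBINT t=ereal 0..ereal u. exp (- (t\<^sup>2))) has_real_derivative exp (- (x\<^sup>2))) (at x)"
    by (simp add: at_within_Icc_at has_real_derivative_iff_has_vector_derivative)
  from DERIV_cmult[OF this, of "2 / sqrt pi"] show ?thesis unfolding erf_alt [abs_def]
    by simp
qed
lemma erf_0: "erf 0 = 0" by (simp add: erf_alt)
lemma erf_pos: assumes "x > 0" shows "erf x > 0"
proof -
  have "erf 0 < erf x"
    by (rule DERIV_pos_imp_increasing[OF assms]) (use erf_deriv in \<open>auto intro!: exI conjI\<close>)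
  then show ?thesis by (simp add: erf_0)
qed
lemma sqrt_s2: assumes "k > 0" "1 + \<beta> * SNR > 0"
  shows "sqrt (2 * (k * pi\<^sup>2 * (1 / (1 + \<beta> * SNR)))) = pi * sqrt (2 * k) / sqrt (1 + \<beta> * SNR)"
proof -
  have "2 * (k * pi\<^sup>2 * (1 / (1 + \<beta> * SNR))) = (2 * k) * pi\<^sup>2 / (1 + \<beta> * SNR)" by simp
  then show ?thesis by (simp add: real_sqrt_mult real_sqrt_divide)
qed

lemma pE_eq: assumes "k > 0" "1 + \<beta> * SNR > 0"
  shows "pE (sigma2 k SNR \<beta>) \<theta> = erf (\<theta> / (2 * pi * sqrt (2 * k)) * sqrt (1 + \<beta> * SNR))
     / erf (1 / sqrt (2 * k) * sqrt (1 + \<beta> * SNR))"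
proof -
  have p: "pi > 0" "sqrt (2*k) > 0" "sqrt (1 + \<beta> * SNR) > 0" using assms by auto
  show ?thesis unfolding pE_def sigma2_def sigmaE2_def sqrt_s2[OF assms]
    using p by (simp add: field_simps)
qed

theorem corollary2:
  fixes K' T SNR kB kU \<beta>opt :: real and MB MR MU :: nat
  defines "L \<equiv> T / (real MB * real MR * real MU + real MB * real MU)"
  defines "f \<equiv> (\<lambda>\<beta>. sqrt (1 + \<beta> * SNR))"
  defines "a \<equiv> beamwidth MB / (2 * pi * sqrt (2 * kB))"
  defines "b \<equiv> beamwidth MU / (2 * pi * sqrt (2 * kU))"
  defines "c \<equiv> 1 / sqrt (2 * kB)"
  defines "d \<equiv> 1 / sqrt (2 * kU)"
  assumes "MB \<ge> 1" and "MU \<ge> 1"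
    and "T > 0" and "K' > 0" and "SNR > 0"
    and "0 < kB" and "kB \<le> 1" and "0 < kU" and "kU \<le> 1"
    and "\<beta>opt \<in> {0<..<L}"
    and "\<forall>\<beta>\<in>{0..<L}. ASE K' T MB MR MU SNR kB kU \<beta> \<le> ASE K' T MB MR MU SNR kB kU \<beta>opt"
  shows "SNR / (sqrt pi * f \<beta>opt) * (L - \<beta>opt) *
           (a * exp (- (a\<^sup>2 * (f \<beta>opt)\<^sup>2)) / erf (a * f \<beta>opt)
          + b * exp (- (b\<^sup>2 * (f \<beta>opt)\<^sup>2)) / erf (b * f \<beta>opt)
          - c * exp (- (c\<^sup>2 * (f \<beta>opt)\<^sup>2)) / erf (c * f \<beta>opt)
          - d * exp (- (d\<^sup>2 * (f \<beta>opt)\<^sup>2)) / erf (d * f \<beta>opt)) = 1"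
proof -
  define M where "M = real MB * real MR * real MU + real MB * real MU"
  define x where "x = \<beta>opt"
  define C where "C = K' * M / T"
  have M0: "M > 0" unfolding M_def using assms(7,8) by (simp add: add_nonneg_pos)
  have L_eq: "L = T / M" unfolding L_def M_def by simp
  have L0: "L > 0" using M0 assms(9) L_eq by simp
  have x0: "0 < x" and xL: "x < L" using assms(16) unfolding x_def by auto
  have C0: "C > 0" unfolding C_def using M0 assms by simp
  have a0: "a > 0" unfolding a_def beamwidth_def using assms(7,12) by simp
  have b0: "b > 0" unfolding b_def beamwidth_def using assms(8,14) by simp
  have c0: "c > 0" unfolding c_def using assms(12) by simp
  have d0: "d > 0" unfolding d_def using assms(14) by simp
  define h where "h = (\<lambda>\<beta>. C * (L - \<beta>) * (erf (a * f \<beta>) * erf (b * f \<beta>)) / (erf (c * f \<beta>) * erf (d * f \<beta>)))"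
  have ASE_eq: "ASE K' T MB MR MU SNR kB kU \<beta> = h \<beta>" if "\<beta> \<ge> 0" for \<beta>
  proof -
    have pos: "1 + \<beta> * SNR > 0" using that assms(11) by (simp add: add_pos_nonneg)
    have "T - \<beta> * M = M * (L - \<beta>)" using M0 L_eq by (simp add: field_simps)
    then show ?thesis
      unfolding ASE_def pE_eq[OF assms(12) pos] pE_eq[OF assms(14) pos] h_def C_def
        M_def[symmetric] a_def b_def c_def d_def f_def
      by simp
  qed
  define F where "F = f x"
  have F0: "F > 0" unfolding F_def f_def using x0 assms(11) by (simp add: add_pos_pos)
  have df: "(f has_real_derivative (SNR / (2 * F))) (at x)"
  proof -
    have "((\<lambda>\<beta>. 1 + \<beta> * SNR) has_real_derivative SNR) (at x)"
      by (auto intro!: derivative_eq_intros)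
    from DERIV_chain2[OF DERIV_real_sqrt this] F0 show ?thesis
      unfolding f_def F_def by (simp add: f_def field_simps)
  qed
  have dE: "((\<lambda>\<beta>. erf (q * f \<beta>)) has_real_derivative
      (2 / sqrt pi * exp (- (q\<^sup>2 * F\<^sup>2)) * (q * (SNR / (2 * F))))) (at x)" for q
  proof -
    have "((\<lambda>\<beta>. q * f \<beta>) has_real_derivative q * (SNR / (2 * F))) (at x)"
      using DERIV_cmult[OF df, of q] .
    from DERIV_chain2[OF erf_deriv this] show ?thesis
      by (simp add: F_def power_mult_distrib)
  qed
  define Ea where "Ea = erf (a * F)"
  define Eb where "Eb = erf (b * F)"
  define Ec where "Ec = erf (c * F)"
  define Ed where "Ed = erf (d * F)"
  have Ea0: "Ea > 0" unfolding Ea_def using a0 F0 by (simp add: erf_pos)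
  have Eb0: "Eb > 0" unfolding Eb_def using b0 F0 by (simp add: erf_pos)
  have Ec0: "Ec > 0" unfolding Ec_def using c0 F0 by (simp add: erf_pos)
  have Ed0: "Ed > 0" unfolding Ed_def using d0 F0 by (simp add: erf_pos)
  define pa where "pa = 2 / sqrt pi * exp (- (a\<^sup>2 * F\<^sup>2)) * (a * (SNR / (2 * F)))"
  define pb where "pb = 2 / sqrt pi * exp (- (b\<^sup>2 * F\<^sup>2)) * (b * (SNR / (2 * F)))"
  define pc where "pc = 2 / sqrt pi * exp (- (c\<^sup>2 * F\<^sup>2)) * (c * (SNR / (2 * F)))"
  define pd where "pd = 2 / sqrt pi * exp (- (d\<^sup>2 * F\<^sup>2)) * (d * (SNR / (2 * F)))"
  have dL: "((\<lambda>\<beta>. C * (L - \<beta>)) has_real_derivative - C) (at x)"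
    by (auto intro!: derivative_eq_intros)
  have dN: "((\<lambda>\<beta>. C * (L - \<beta>) * (erf (a * f \<beta>) * erf (b * f \<beta>))) has_real_derivative
     (- C) * (Ea * Eb) + C * (L - x) * (pa * Eb + Ea * pb)) (at x)"
    using DERIV_mult[OF dL DERIV_mult[OF dE[of a] dE[of b]]]
    unfolding pa_def pb_def Ea_def Eb_def F_def by (simp add: algebra_simps)
  have dD: "((\<lambda>\<beta>. erf (c * f \<beta>) * erf (d * f \<beta>)) has_real_derivative
     (pc * Ed + Ec * pd)) (at x)"
    using DERIV_mult[OF dE[of c] dE[of d]]
    unfolding pc_def pd_def Ec_def Ed_def F_def by (simp add: algebra_simps)
  have ne: "erf (c * f x) * erf (d * f x) \<noteq> 0" using Ec0 Ed0 unfolding Ec_def Ed_def F_def by simp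
  have dh: "(h has_real_derivative
     ((- C * (Ea * Eb) + C * (L - x) * (pa * Eb + Ea * pb)) * (Ec * Ed) - C * (L - x) * (Ea * Eb) * (pc * Ed + Ec * pd))
       / ((Ec * Ed) * (Ec * Ed))) (at x)"
    using DERIV_divide[OF dN dD ne] unfolding h_def Ea_def Eb_def Ec_def Ed_def F_def
    by simp
  have "((- C * (Ea * Eb) + C * (L - x) * (pa * Eb + Ea * pb)) * (Ec * Ed) - C * (L - x) * (Ea * Eb) * (pc * Ed + Ec * pd))
       / ((Ec * Ed) * (Ec * Ed)) = 0"
  proof (rule DERIV_local_max[OF dh, of "min x (L - x)"])
    show "0 < min x (L - x)" using x0 xL by simp
    show "\<forall>y. \<bar>x - y\<bar> < min x (L - x) \<longrightarrow> h y \<le> h x"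
    proof (intro allI impI)
      fix y assume "\<bar>x - y\<bar> < min x (L - x)"
      then have y: "0 \<le> y" "y < L" by auto
      then have "ASE K' T MB MR MU SNR kB kU y \<le> ASE K' T MB MR MU SNR kB kU x"
        using assms(17) unfolding x_def by auto
      then show "h y \<le> h x" using ASE_eq[of y] ASE_eq[of x] y x0 by simp
    qed
  qed
  then have num: "(- C * (Ea * Eb) + C * (L - x) * (pa * Eb + Ea * pb)) * (Ec * Ed) = C * (L - x) * (Ea * Eb) * (pc * Ed + Ec * pd)"
    using Ec0 Ed0 by simp
  have key: "(L - x) * (pa / Ea + pb / Eb - pc / Ec - pd / Ed) = 1"
  proof -
    have "(L - x) * (pa / Ea + pb / Eb - pc / Ec - pd / Ed) * (C * Ea * Eb * Ec * Ed)
       = (C * (L - x) * (pa * Eb + Ea * pb)) * (Ec * Ed) - C * (L - x) * (Ea * Eb) * (pc * Ed + Ec * pd)"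
      using Ea0 Eb0 Ec0 Ed0 by (simp add: field_simps)
    also have "\<dots> = C * Ea * Eb * Ec * Ed" using num by (simp add: algebra_simps)
    finally show ?thesis using C0 Ea0 Eb0 Ec0 Ed0 by simp
  qed
  have sp: "sqrt pi > 0" by simp
  have "SNR / (sqrt pi * F) * (L - x) *
           (a * exp (- (a\<^sup>2 * F\<^sup>2)) / Ea + b * exp (- (b\<^sup>2 * F\<^sup>2)) / Eb
          - c * exp (- (c\<^sup>2 * F\<^sup>2)) / Ec - d * exp (- (d\<^sup>2 * F\<^sup>2)) / Ed)
        = (L - x) * (pa / Ea + pb / Eb - pc / Ec - pd / Ed)"
  proof -
    have t: "2 / sqrt pi * e * (q * (SNR / (2 * F))) / E = SNR / (sqrt pi * F) * (q * e / E)" for e q E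
      using F0 sp by (simp add: field_simps)
    show ?thesis unfolding pa_def pb_def pc_def pd_def t by (simp add: algebra_simps)
  qed
  from this key have "SNR / (sqrt pi * F) * (L - x) *
           (a * exp (- (a\<^sup>2 * F\<^sup>2)) / Ea + b * exp (- (b\<^sup>2 * F\<^sup>2)) / Eb
          - c * exp (- (c\<^sup>2 * F\<^sup>2)) / Ec - d * exp (- (d\<^sup>2 * F\<^sup>2)) / Ed) = 1" by (rule trans)
  then show ?thesis unfolding Ea_def Eb_def Ec_def Ed_def F_def x_def .
qed
end
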